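(* Let $\Sigma=\{1,\dots,q\}^{\mathbb N}$ with shift $\sigma$, $\psi:\Sigma\to\mathbb R$ continuous, and let $\mu$ be a conformal measure for $\psi$ (i.e. $\mathcal L_\psi^*\mu=r(\mathcal L_\psi)\mu$). If there is a constant $C>0$ such that $\liminf_{n\to\infty}\xi_n(\underline x)\le C$ for $\mu$-a.e. $\underline x\in\Sigma$, then $\mu$ is a sequential Gibbs measure for $\psi$.
   Context: $\mathcal L_\psi\phi(\underline x)=\sum_{\underline y\in\sigma^{-1}\underline x}e^{\psi(\underline y)}\phi(\underline y)$ on continuous functions, $r(\mathcal L_\psi)$ its spectral radius, $(\mathcal L_\psi^*\mu)(\phi)=\int\mathcal L_\psi\phi\,d\mu$. Cylinders $[a_0\dots a_{n-1}]=\{\underline y:y_i=a_i,0\le i<n\}$; $\psi^n=\sum_{i<n}\psi\circ\sigma^i$. $\xi_n(\underline x)=\sup_{\underline y\in[x_0\dots x_{n-1}]}\sum_{i=0}^{n-1}|\psi(\sigma^i\underline x)-\psi(\sigma^i\underline y)|$. $\mu$ is a sequential Gibbs measure for $\psi$ if there are constants $K\ge1,P$ such that for $\mu$-a.e. $\underline x$ there is an increasing sequence $n_i(\underline x)$ with $K^{-1}\le\mu([x_j\dots x_{n_i-1}])e^{-\psi^{n_i-j}(\sigma^j\underline x)+(n_i-j)P}\le K$ for all $i$ and $0\le j\le n_i-1$. *)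

theory Defs
  imports "HOL-Probability.Probability"
begin

text \<open>Full shift on q symbols, coded as sequences with values in {0..<q}
  (symbol k+1 of the paper is coded as k). The topology on nat \<Rightarrow> nat is
  the product topology (nat discrete), restricted to the shift space.\<close>

definition shift_space :: "nat \<Rightarrow> (nat \<Rightarrow> nat) set" where
  "shift_space q = {x. \<forall>i. x i < q}"

definition shift :: "(nat \<Rightarrow> nat) \<Rightarrow> (nat \<Rightarrow> nat)" where
  "shift x = (\<lambda>i. x (Suc i))"

definition cons_sym :: "nat \<Rightarrow> (nat \<Rightarrow> nat) \<Rightarrow> (nat \<Rightarrow> nat)" where
  "cons_sym a x = (\<lambda>i. case i of 0 \<Rightarrow> a | Suc k \<Rightarrow> x k)"

definition transfer :: "nat \<Rightarrow> ((nat \<Rightarrow> nat) \<Rightarrow> real) \<Rightarrow> ((nat \<Rightarrow> nat) \<Rightarrow> real) \<Rightarrow> (nat \<Rightarrow> nat) \<Rightarrow> real" where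
  "transfer q \<psi> \<phi> x = (\<Sum>a<q. exp (\<psi> (cons_sym a x)) * \<phi> (cons_sym a x))"

definition birkhoff :: "((nat \<Rightarrow> nat) \<Rightarrow> real) \<Rightarrow> nat \<Rightarrow> (nat \<Rightarrow> nat) \<Rightarrow> real" where
  "birkhoff \<psi> n x = (\<Sum>i<n. \<psi> ((shift ^^ i) x))"

definition sup_norm :: "nat \<Rightarrow> ((nat \<Rightarrow> nat) \<Rightarrow> real) \<Rightarrow> real" where
  "sup_norm q \<phi> = (SUP x\<in>shift_space q. \<bar>\<phi> x\<bar>)"

definition transfer_pow_norm :: "nat \<Rightarrow> ((nat \<Rightarrow> nat) \<Rightarrow> real) \<Rightarrow> nat \<Rightarrow> real" where
  "transfer_pow_norm q \<psi> n =
     (SUP \<phi>\<in>{\<phi>. continuous_on (shift_space q) \<phi> \<and> (\<forall>x\<in>shift_space q. \<bar>\<phi> x\<bar> \<le> 1)}.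
        sup_norm q ((transfer q \<psi> ^^ n) \<phi>))"

text \<open>spectral radius via Gelfand's formula r = inf_n ||L^n||^(1/n) (= lim)\<close>
definition spectral_radius_transfer :: "nat \<Rightarrow> ((nat \<Rightarrow> nat) \<Rightarrow> real) \<Rightarrow> real" where
  "spectral_radius_transfer q \<psi> =
     (INF n\<in>{1..}. transfer_pow_norm q \<psi> n powr (1 / real n))"

definition cylinder :: "nat \<Rightarrow> (nat \<Rightarrow> nat) \<Rightarrow> nat \<Rightarrow> nat \<Rightarrow> (nat \<Rightarrow> nat) set" where
  "cylinder q x j n = {y \<in> shift_space q. \<forall>k < n - j. y k = x (j + k)}"

definition xi :: "nat \<Rightarrow> ((nat \<Rightarrow> nat) \<Rightarrow> real) \<Rightarrow> nat \<Rightarrow> (nat \<Rightarrow> nat) \<Rightarrow> real" where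
  "xi q \<psi> n x = (SUP y\<in>cylinder q x 0 n.
      (\<Sum>i<n. \<bar>\<psi> ((shift ^^ i) x) - \<psi> ((shift ^^ i) y)\<bar>))"

definition conformal :: "nat \<Rightarrow> ((nat \<Rightarrow> nat) \<Rightarrow> real) \<Rightarrow> (nat \<Rightarrow> nat) measure \<Rightarrow> bool" where
  "conformal q \<psi> \<mu> \<longleftrightarrow>
     prob_space \<mu> \<and> sets \<mu> = sets (restrict_space borel (shift_space q)) \<and>
     (\<forall>\<phi>. continuous_on (shift_space q) \<phi> \<longrightarrow>
        (\<integral>x. transfer q \<psi> \<phi> x \<partial>\<mu>) = spectral_radius_transfer q \<psi> * (\<integral>x. \<phi> x \<partial>\<mu>))"

definition sequential_gibbs :: "nat \<Rightarrow> ((nat \<Rightarrow> nat) \<Rightarrow> real) \<Rightarrow> (nat \<Rightarrow> nat) measure \<Rightarrow> bool" where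
  "sequential_gibbs q \<psi> \<mu> \<longleftrightarrow>
     (\<exists>K P. K \<ge> 1 \<and> (AE x in \<mu>. \<exists>ns::nat \<Rightarrow> nat. strict_mono ns \<and>
        (\<forall>i. \<forall>j < ns i.
           1 / K \<le> measure \<mu> (cylinder q x j (ns i)) *
                     exp (- birkhoff \<psi> (ns i - j) ((shift ^^ j) x) + real (ns i - j) * P) \<and>
           measure \<mu> (cylinder q x j (ns i)) *
                     exp (- birkhoff \<psi> (ns i - j) ((shift ^^ j) x) + real (ns i - j) * P) \<le> K)))"

end

theory Submission imports Defs begin

lemma shift_space_PiE: "shift_space q = PiE UNIV (\<lambda>_. {..<q})"
  unfolding shift_space_def by (auto simp: PiE_def Pi_def extensional_def)

lemma compact_shift_space: "compact (shift_space q)"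
proof -
  have "compactin (product_topology (\<lambda>_. euclidean) UNIV) (PiE UNIV (\<lambda>_::nat. {..<q::nat}))"
    by (subst compactin_PiE) (auto intro: finite_imp_compact)
  then show ?thesis
    by (simp add: shift_space_PiE euclidean_product_topology)
qed

lemma cont_bounded:
  assumes "continuous_on (shift_space q) (f :: _ \<Rightarrow> real)"
  shows "\<exists>B. \<forall>x\<in>shift_space q. \<bar>f x\<bar> \<le> B"
proof -
  have "compact (f ` shift_space q)"
    by (rule compact_continuous_image[OF assms compact_shift_space])
  then obtain B where "\<forall>y\<in>f ` shift_space q. norm y \<le> B"
    using compact_imp_bounded bounded_iff by metis
  then show ?thesis by auto
qed

lemma cons_sym_cont: "continuous_on A (cons_sym a)"
  unfolding cons_sym_def
proof (intro continuous_on_coordinatewise_then_product)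
  fix i show "continuous_on A (\<lambda>x. case i of 0 \<Rightarrow> a | Suc k \<Rightarrow> x k)"
    by (cases i) (auto intro: continuous_on_subset[OF continuous_on_product_coordinates])
qed

lemma cons_sym_in: "a < q \<Longrightarrow> x \<in> shift_space q \<Longrightarrow> cons_sym a x \<in> shift_space q"
  unfolding cons_sym_def shift_space_def by (auto split: nat.splits)

lemma transfer_cont:
  assumes psi: "continuous_on (shift_space q) \<psi>" and phi: "continuous_on (shift_space q) \<phi>"
  shows "continuous_on (shift_space q) (transfer q \<psi> \<phi>)"
proof -
  have c: "continuous_on (shift_space q) (\<lambda>x. f (cons_sym a x))" if "a < q" "continuous_on (shift_space q) f" for a and f :: "_ \<Rightarrow> real"
    by (rule continuous_on_compose2[OF that(2) cons_sym_cont]) (use that cons_sym_in in auto)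
  show ?thesis unfolding transfer_def[abs_def]
    by (intro continuous_intros c psi phi) auto
qed


lemma shift_pow: "(shift ^^ k) y = (\<lambda>t. y (k + t))"
  by (induction k arbitrary: y) (auto simp: shift_def)

definition pre :: "(nat \<Rightarrow> nat) \<Rightarrow> nat \<Rightarrow> (nat \<Rightarrow> nat) \<Rightarrow> (nat \<Rightarrow> nat)" where
  "pre a n x = (\<lambda>i. if i < n then a i else x (i - n))"

lemma pre_in: "a \<in> shift_space q \<Longrightarrow> x \<in> shift_space q \<Longrightarrow> pre a n x \<in> shift_space q"
  unfolding pre_def shift_space_def by auto

lemma birkhoff_Suc: "birkhoff \<psi> (Suc n) z = \<psi> z + birkhoff \<psi> n (shift z)"
  unfolding birkhoff_def sum.lessThan_Suc_shift by (simp add: funpow_Suc_right del: funpow.simps)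

lemma cons_pre: "cons_sym (a 0) (pre (shift a) n x) = pre a (Suc n) x"
  unfolding cons_sym_def pre_def shift_def by (auto split: nat.splits)

lemma shift_pre: "shift (pre a (Suc n) x) = pre (shift a) n x"
  unfolding pre_def shift_def by auto

lemma cons_in_cyl:
  assumes "a \<in> shift_space q"
  shows "(cons_sym b x \<in> cylinder q a 0 (Suc n)) \<longleftrightarrow> b = a 0 \<and> x \<in> cylinder q (shift a) 0 n"
  using assms unfolding cylinder_def shift_space_def cons_sym_def shift_def
  by (auto split: nat.splits)

lemma transfer_cyl:
  assumes a: "a \<in> shift_space q"
  shows "transfer q \<psi> (\<lambda>y. indicator (cylinder q a 0 (Suc n)) y * g y) =
     (\<lambda>y. indicator (cylinder q (shift a) 0 n) y * (exp (\<psi> (cons_sym (a 0) y)) * g (cons_sym (a 0) y)))"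
proof
  fix x
  have a0: "a 0 < q" using a by (auto simp: shift_space_def)
  have "transfer q \<psi> (\<lambda>y. indicator (cylinder q a 0 (Suc n)) y * g y) x =
     (\<Sum>b<q. if b = a 0 then indicator (cylinder q (shift a) 0 n) x * (exp (\<psi> (cons_sym b x)) * g (cons_sym b x)) else 0)"
    unfolding transfer_def
    by (intro sum.cong refl) (auto simp: indicator_def cons_in_cyl[OF a])
  also have "\<dots> = indicator (cylinder q (shift a) 0 n) x * (exp (\<psi> (cons_sym (a 0) x)) * g (cons_sym (a 0) x))"
    using a0 by (simp add: sum.delta)
  finally show "transfer q \<psi> (\<lambda>y. indicator (cylinder q a 0 (Suc n)) y * g y) x = \<dots>" .
qed

lemma shift_in: "a \<in> shift_space q \<Longrightarrow> shift a \<in> shift_space q"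
  unfolding shift_space_def shift_def by auto

lemma transfer_pow_cyl:
  assumes "a \<in> shift_space q"
  shows "(transfer q \<psi> ^^ n) (\<lambda>y. indicator (cylinder q a 0 n) y * g y) x =
     (if x \<in> shift_space q then exp (birkhoff \<psi> n (pre a n x)) * g (pre a n x) else 0)"
  using assms
proof (induction n arbitrary: a g)
  case 0
  then show ?case by (auto simp: cylinder_def pre_def birkhoff_def indicator_def)
next
  case (Suc n)
  have "(transfer q \<psi> ^^ Suc n) (\<lambda>y. indicator (cylinder q a 0 (Suc n)) y * g y) x =
     (transfer q \<psi> ^^ n) (\<lambda>y. indicator (cylinder q (shift a) 0 n) y * (exp (\<psi> (cons_sym (a 0) y)) * g (cons_sym (a 0) y))) x"
    by (simp only: funpow_Suc_right o_apply transfer_cyl[OF Suc.prems])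
  also have "\<dots> = (if x \<in> shift_space q then exp (birkhoff \<psi> n (pre (shift a) n x)) *
       (exp (\<psi> (cons_sym (a 0) (pre (shift a) n x))) * g (cons_sym (a 0) (pre (shift a) n x))) else 0)"
    by (rule Suc.IH[OF shift_in[OF Suc.prems]])
  also have "\<dots> = (if x \<in> shift_space q then exp (birkhoff \<psi> (Suc n) (pre a (Suc n) x)) * g (pre a (Suc n) x) else 0)"
    by (simp add: cons_pre birkhoff_Suc shift_pre exp_add)
  finally show ?case .
qed

lemma indicator_cyl_cont: "continuous_on (shift_space q) (indicator (cylinder q a 0 n) :: _ \<Rightarrow> real)"
proof -
  have "continuous_on (shift_space q) (\<lambda>y. \<Prod>k<n. (\<lambda>c. if c = a k then 1 else 0 :: real) (y k))"
    by (intro continuous_intros continuous_on_compose2[OF Topological_Spaces.continuous_on_discrete continuous_on_subset[OF continuous_on_product_coordinates]]) auto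
  then show ?thesis
    by (rule continuous_on_cong[THEN iffD1, rotated 2]) (auto simp: indicator_def cylinder_def)
qed


lemma shift_pow_in: "y \<in> shift_space q \<Longrightarrow> (shift ^^ i) y \<in> shift_space q"
  unfolding shift_pow shift_space_def by auto

lemma xi_bound:
  assumes B: "\<forall>y\<in>shift_space q. \<bar>\<psi> y\<bar> \<le> B"
    and x: "x \<in> shift_space q" and z: "z \<in> shift_space q" and j: "j < m"
  shows "\<bar>birkhoff \<psi> (m-j) ((shift^^j) x) - birkhoff \<psi> (m-j) (pre ((shift^^j) x) (m-j) z)\<bar> \<le> xi q \<psi> m x"
proof -
  define h where "h i = \<bar>\<psi> ((shift^^i) x) - \<psi> ((shift^^i) (pre x m z))\<bar>" for i
  have e1: "(shift^^i) (pre ((shift^^j) x) (m-j) z) = (shift^^(j+i)) (pre x m z)" if "i < m - j" for i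
    using that j by (auto simp: shift_pow pre_def add.assoc intro!: ext arg_cong[where f=z])
  have e2: "(shift^^i) ((shift^^j) x) = (shift^^(j+i)) x" for i
    by (simp add: shift_pow add.assoc)
  have "\<bar>birkhoff \<psi> (m-j) ((shift^^j) x) - birkhoff \<psi> (m-j) (pre ((shift^^j) x) (m-j) z)\<bar>
      = \<bar>\<Sum>i<m-j. \<psi> ((shift^^i) ((shift^^j) x)) - \<psi> ((shift^^i) (pre ((shift^^j) x) (m-j) z))\<bar>"
    unfolding birkhoff_def by (simp add: sum_subtractf)
  also have "\<dots> \<le> (\<Sum>i<m-j. \<bar>\<psi> ((shift^^i) ((shift^^j) x)) - \<psi> ((shift^^i) (pre ((shift^^j) x) (m-j) z))\<bar>)"
    by (rule sum_abs)
  also have "\<dots> = (\<Sum>i<m-j. h (j+i))"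
    by (intro sum.cong refl) (simp add: h_def e1 e2)
  also have "\<dots> = sum h ((\<lambda>i. j+i) ` {..<m-j})"
    by (simp add: sum.reindex)
  also have "\<dots> \<le> sum h {..<m}"
    by (intro sum_mono2) (auto simp: h_def)
  also have "\<dots> \<le> xi q \<psi> m x"
    unfolding xi_def h_def
  proof (rule cSUP_upper)
    show "pre x m z \<in> cylinder q x 0 m"
      using pre_in[OF x z] by (auto simp: cylinder_def pre_def)
    show "bdd_above ((\<lambda>y. \<Sum>i<m. \<bar>\<psi> ((shift ^^ i) x) - \<psi> ((shift ^^ i) y)\<bar>) ` cylinder q x 0 m)"
    proof (rule bdd_aboveI2)
      fix y assume "y \<in> cylinder q x 0 m"
      then have y: "y \<in> shift_space q" by (auto simp: cylinder_def)
      have "(\<Sum>i<m. \<bar>\<psi> ((shift ^^ i) x) - \<psi> ((shift ^^ i) y)\<bar>) \<le> (\<Sum>i<m. 2 * B)"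
      proof (intro sum_mono)
        fix i
        have "\<bar>\<psi> ((shift ^^ i) x)\<bar> \<le> B" "\<bar>\<psi> ((shift ^^ i) y)\<bar> \<le> B"
          using B shift_pow_in[OF x] shift_pow_in[OF y] by auto
        then show "\<bar>\<psi> ((shift ^^ i) x) - \<psi> ((shift ^^ i) y)\<bar> \<le> 2 * B" by linarith
      qed
      then show "(\<Sum>i<m. \<bar>\<psi> ((shift ^^ i) x) - \<psi> ((shift ^^ i) y)\<bar>) \<le> real m * (2 * B)" by simp
    qed
  qed
  finally show ?thesis .
qed


theorem proposition4:
  fixes q :: nat and \<psi> :: "(nat \<Rightarrow> nat) \<Rightarrow> real" and \<mu> :: "(nat \<Rightarrow> nat) measure" and C :: real
  assumes "q \<ge> 1"
    and "continuous_on (shift_space q) \<psi>"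
    and "conformal q \<psi> \<mu>"
    and "C > 0"
    and "AE x in \<mu>. liminf (\<lambda>n. ereal (xi q \<psi> n x)) \<le> ereal C"
  shows "sequential_gibbs q \<psi> \<mu>"
proof -
  define S where "S = shift_space q"
  define r where "r = spectral_radius_transfer q \<psi>"
  define L where "L = transfer q \<psi>"
  have psi: "continuous_on S \<psi>" using assms(2) by (simp add: S_def)
  have P: "prob_space \<mu>" and sets: "sets \<mu> = sets (restrict_space borel S)"
    and conf: "\<And>\<phi>. continuous_on S \<phi> \<Longrightarrow> (\<integral>x. L \<phi> x \<partial>\<mu>) = r * (\<integral>x. \<phi> x \<partial>\<mu>)"
    using assms(3) by (auto simp: conformal_def S_def r_def L_def)
  interpret prob_space \<mu> by (rule P)
  have space: "space \<mu> = S"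
    using sets_eq_imp_space_eq[OF sets] by (simp add: space_restrict_space)
  have integ: "integrable \<mu> f" if f: "continuous_on S f" for f :: "_ \<Rightarrow> real"
  proof -
    have m: "f \<in> borel_measurable \<mu>"
      using borel_measurable_continuous_on_restrict[OF f] measurable_cong_sets[OF sets refl] by blast
    obtain B where "\<forall>x\<in>S. \<bar>f x\<bar> \<le> B" using cont_bounded f S_def by blast
    then show ?thesis
      by (intro integrable_const_bound[where B=B] m) (auto simp: space)
  qed
  have Lcont: "continuous_on S (L \<phi>)" if "continuous_on S \<phi>" for \<phi>
    using transfer_cont that assms(2) by (simp add: S_def L_def)
  have iter: "continuous_on S ((L ^^ n) \<phi>) \<and> (\<integral>x. (L ^^ n) \<phi> x \<partial>\<mu>) = r ^ n * (\<integral>x. \<phi> x \<partial>\<mu>)"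
    if "continuous_on S \<phi>" for n \<phi>
    using that
  proof (induction n arbitrary: \<phi>)
    case 0 then show ?case by simp
  next
    case (Suc n)
    have "continuous_on S ((L ^^ n) (L \<phi>)) \<and> (\<integral>x. (L ^^ n) (L \<phi>) x \<partial>\<mu>) = r ^ n * (\<integral>x. L \<phi> x \<partial>\<mu>)"
      by (rule Suc.IH[OF Lcont[OF Suc.prems]])
    then show ?case
      by (simp only: funpow_Suc_right o_apply conf[OF Suc.prems]) (simp add: algebra_simps)
  qed
  obtain B where B: "\<forall>y\<in>S. \<bar>\<psi> y\<bar> \<le> B" using cont_bounded psi S_def by blast
  have rpos: "r > 0"
  proof -
    have "(\<integral>x. exp (- B) \<partial>\<mu>) \<le> (\<integral>x. L (\<lambda>_. 1) x \<partial>\<mu>)"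
    proof (rule integral_mono_AE)
      show "integrable \<mu> (L (\<lambda>_. 1))" by (intro integ Lcont) simp
      show "AE x in \<mu>. exp (- B) \<le> L (\<lambda>_. 1) x"
      proof (rule AE_I2)
        fix x assume "x \<in> space \<mu>"
        then have x: "x \<in> S" by (simp add: space)
        have "cons_sym 0 x \<in> S" using cons_sym_in[of 0 q x] x assms(1) by (simp add: S_def)
        then have "exp (- B) \<le> exp (\<psi> (cons_sym 0 x))" using B by auto
        also have "\<dots> \<le> L (\<lambda>_. 1) x"
          unfolding L_def transfer_def
          using member_le_sum[of 0 "{..<q}" "\<lambda>a. exp (\<psi> (cons_sym a x)) * 1"] assms(1) by simp
        finally show "exp (- B) \<le> L (\<lambda>_. 1) x" .
      qed
    qed simp
    then have "exp (- B) \<le> r" using conf[of "\<lambda>_. 1"] by (simp add: prob_space)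
    then show ?thesis by (meson exp_gt_zero less_le_trans)
  qed
  have cylmeas: "measure \<mu> (cylinder q a 0 n) = (\<integral>x. indicator (cylinder q a 0 n) x \<partial>\<mu>)" for a n
  proof -
    have c: "continuous_on S (indicator (cylinder q a 0 n) :: _ \<Rightarrow> real)"
      using indicator_cyl_cont by (simp add: S_def)
    have "cylinder q a 0 n \<in> sets \<mu>"
    proof -
      have "(indicator (cylinder q a 0 n) :: _ \<Rightarrow> real) \<in> borel_measurable \<mu>"
        using borel_measurable_continuous_on_restrict[OF c] measurable_cong_sets[OF sets refl] by blast
      then have "cylinder q a 0 n \<inter> space \<mu> \<in> sets \<mu>" by (simp add: borel_measurable_indicator_iff)
      moreover have "cylinder q a 0 n \<inter> space \<mu> = cylinder q a 0 n"
        by (auto simp: space S_def cylinder_def)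
      ultimately show ?thesis by simp
    qed
    then show ?thesis by simp
  qed
  have core: "exp (birkhoff \<psi> (m-j) ((shift^^j) x) - xi q \<psi> m x) \<le> measure \<mu> (cylinder q x j m) * r ^ (m-j)
     \<and> measure \<mu> (cylinder q x j m) * r ^ (m-j) \<le> exp (birkhoff \<psi> (m-j) ((shift^^j) x) + xi q \<psi> m x)"
    if x: "x \<in> S" and j: "j < m" for x j m
  proof -
    define b where "b = (shift^^j) x"
    define N where "N = m - j"
    define X where "X = xi q \<psi> m x"
    have b: "b \<in> shift_space q" using shift_pow_in x by (simp add: b_def S_def)
    have cyl: "cylinder q x j m = cylinder q b 0 N"
      by (auto simp: cylinder_def b_def N_def shift_pow)
    have ic: "continuous_on S (indicator (cylinder q b 0 N) :: _ \<Rightarrow> real)"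
      using indicator_cyl_cont by (simp add: S_def)
    have mu: "measure \<mu> (cylinder q x j m) * r ^ N = (\<integral>z. (L ^^ N) (indicator (cylinder q b 0 N)) z \<partial>\<mu>)"
      using iter[OF ic, of N] cyl cylmeas by simp
    have val: "(L ^^ N) (indicator (cylinder q b 0 N)) z = exp (birkhoff \<psi> N (pre b N z))"
      if "z \<in> space \<mu>" for z
    proof -
      from that have z: "z \<in> shift_space q" by (simp add: space S_def)
      have "(L ^^ N) (indicator (cylinder q b 0 N)) z = (L ^^ N) (\<lambda>y. indicator (cylinder q b 0 N) y * (\<lambda>_. 1) y) z"
        by simp
      also have "\<dots> = exp (birkhoff \<psi> N (pre b N z))"
        unfolding L_def transfer_pow_cyl[OF b] using z by simp
      finally show ?thesis .
    qed
    have diff: "\<bar>birkhoff \<psi> N b - birkhoff \<psi> N (pre b N z)\<bar> \<le> X" if "z \<in> space \<mu>" for z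
      using xi_bound[of q \<psi> B x z j m] B x j that by (simp add: space S_def b_def N_def X_def)
    have intL: "integrable \<mu> ((L ^^ N) (indicator (cylinder q b 0 N)))"
      using integ[OF conjunct1[OF iter[OF ic, of N]]] .
    have "(\<integral>z. exp (birkhoff \<psi> N b - X) \<partial>\<mu>) \<le> (\<integral>z. (L ^^ N) (indicator (cylinder q b 0 N)) z \<partial>\<mu>)"
    proof (rule integral_mono_AE[OF _ intL])
      show "AE z in \<mu>. exp (birkhoff \<psi> N b - X) \<le> (L ^^ N) (indicator (cylinder q b 0 N)) z"
        using val diff by (intro AE_I2) (simp, smt (verit, best))
    qed simp
    moreover have "(\<integral>z. (L ^^ N) (indicator (cylinder q b 0 N)) z \<partial>\<mu>) \<le> (\<integral>z. exp (birkhoff \<psi> N b + X) \<partial>\<mu>)"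
    proof (rule integral_mono_AE[OF intL])
      show "AE z in \<mu>. (L ^^ N) (indicator (cylinder q b 0 N)) z \<le> exp (birkhoff \<psi> N b + X)"
        using val diff by (intro AE_I2) (simp, smt (verit, best))
    qed simp
    ultimately show ?thesis
      using mu by (simp add: prob_space b_def N_def X_def)
  qed
  have arith: "exp (- c) \<le> M * exp (- Bk) \<and> M * exp (- Bk) \<le> exp c"
    if "exp (Bk - X) \<le> M" "M \<le> exp (Bk + X)" "X \<le> c" for M Bk X c :: real
  proof -
    have "exp (- c) \<le> exp (- X)" using that(3) by simp
    also have "exp (- X) = exp (Bk - X) * exp (- Bk)" by (simp flip: exp_add)
    also have "\<dots> \<le> M * exp (- Bk)" using that(1) by (intro mult_right_mono) auto
    finally have 1: "exp (- c) \<le> M * exp (- Bk)" .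
    have "M * exp (- Bk) \<le> exp (Bk + X) * exp (- Bk)" using that(2) by (intro mult_right_mono) auto
    also have "\<dots> = exp X" by (simp flip: exp_add)
    also have "\<dots> \<le> exp c" using that(3) by simp
    finally show ?thesis using 1 by simp
  qed
  have AEfact: "AE x in \<mu>. \<exists>ns::nat \<Rightarrow> nat. strict_mono ns \<and> (\<forall>i j. j < ns i \<longrightarrow>
        1 / exp (C + 1) \<le> measure \<mu> (cylinder q x j (ns i)) * exp (- birkhoff \<psi> (ns i - j) ((shift ^^ j) x) + real (ns i - j) * ln r) \<and>
        measure \<mu> (cylinder q x j (ns i)) * exp (- birkhoff \<psi> (ns i - j) ((shift ^^ j) x) + real (ns i - j) * ln r) \<le> exp (C + 1))"
      using assms(5) AE_space
    proof eventually_elim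
      case (elim x)
      then have x: "x \<in> S" by (simp add: space)
      have inf: "infinite {n. xi q \<psi> n x < C + 1}"
      proof
        assume "finite {n. xi q \<psi> n x < C + 1}"
        then have "\<not> frequently (\<lambda>n. xi q \<psi> n x < C + 1) sequentially"
          by (simp add: frequently_cofinite flip: cofinite_eq_sequentially)
        then have ev: "eventually (\<lambda>n. C + 1 \<le> xi q \<psi> n x) sequentially"
          by (simp add: not_frequently not_less)
        have "ereal (C + 1) \<le> liminf (\<lambda>n. ereal (xi q \<psi> n x))"
          unfolding le_Liminf_iff
        proof (intro allI impI)
          fix y assume "y < ereal (C + 1)"
          then have h: "\<And>n. C + 1 \<le> xi q \<psi> n x \<Longrightarrow> y < ereal (xi q \<psi> n x)"
            by (meson ereal_less_eq(3) less_le_trans)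
          show "eventually (\<lambda>n. y < ereal (xi q \<psi> n x)) sequentially"
            by (rule eventually_mono[OF ev h])
        qed
        with elim(1) have "ereal (C + 1) \<le> ereal C" by (meson order_trans)
        then show False by simp
      qed
      obtain ns :: "nat \<Rightarrow> nat" where ns: "strict_mono ns" "\<And>i. ns i \<in> {n. xi q \<psi> n x < C + 1}"
        using infinite_enumerate[OF inf] by blast
      show ?case
      proof (intro exI[of _ ns] conjI[OF ns(1)] allI impI)
        fix i j assume j: "j < ns i"
        have X: "xi q \<psi> (ns i) x \<le> C + 1" using ns(2)[of i] by simp
        have e: "exp (- birkhoff \<psi> (ns i - j) ((shift ^^ j) x) + real (ns i - j) * ln r)
            = r ^ (ns i - j) * exp (- birkhoff \<psi> (ns i - j) ((shift ^^ j) x))"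
          using rpos by (simp only: exp_add exp_of_nat_mult) (simp add: mult.commute)
        have c: "exp (- (C + 1)) = 1 / exp (C + 1)" by (simp only: exp_minus inverse_eq_divide)
        have A: "exp (- (C + 1)) \<le> (measure \<mu> (cylinder q x j (ns i)) * r ^ (ns i - j)) * exp (- birkhoff \<psi> (ns i - j) ((shift ^^ j) x))
          \<and> (measure \<mu> (cylinder q x j (ns i)) * r ^ (ns i - j)) * exp (- birkhoff \<psi> (ns i - j) ((shift ^^ j) x)) \<le> exp (C + 1)"
          by (rule arith[OF conjunct1[OF core[OF x j]] conjunct2[OF core[OF x j]] X])
        show "1 / exp (C + 1) \<le> measure \<mu> (cylinder q x j (ns i)) * exp (- birkhoff \<psi> (ns i - j) ((shift ^^ j) x) + real (ns i - j) * ln r) \<and>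
          measure \<mu> (cylinder q x j (ns i)) * exp (- birkhoff \<psi> (ns i - j) ((shift ^^ j) x) + real (ns i - j) * ln r) \<le> exp (C + 1)"
          unfolding e c[symmetric] using A by (simp only: mult.assoc)
      qed
    qed
  show ?thesis
    unfolding sequential_gibbs_def
    by (rule exI[of _ "exp (C + 1)"], rule exI[of _ "ln r"], rule conjI[OF _ AEfact]) (use assms(4) in simp)
qed

end
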